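(* Let $G$ be a chordal graph and let $\mathcal{H}'=(V',\mathcal{E}')$ be a Berge-acyclic subhypergraph of $\mathcal{H}(G)$. If $F_1,\dots,F_k$ are the connected components of $G[\mathcal{E}']$, then each $F_i$ is a cactus and every cycle of each $F_i$ is a $3$-cycle.
   Context: All graphs are finite, simple and undirected. A graph is chordal if it has no induced cycle of length greater than $3$. A cactus is a connected graph in which every edge lies in at most one cycle. A hypergraph is a pair $(V,\mathcal{E})$ with $V$ finite and $\mathcal{E}$ a set of nonempty subsets of $V$; a subhypergraph $(V',\mathcal{E}')$ has $V'\subseteq V$, $\mathcal{E}'\subseteq\mathcal{E}$. A Berge-cycle is a sequence $(E_1,x_1,\dots,E_n,x_n)$, $n\ge 2$, of distinct hyperedges $E_i$ and distinct vertices $x_i$ with $x_i\in E_i\cap E_{i+1}$ for all $i$ (indices mod $n$); a hypergraph is Berge-acyclic if it has no Berge-cycle. For a graph $G=(V,E)$, $\mathcal{H}(G)=(V,\mathcal{E})$ is the hypergraph whose hyperedges are exactly the $3$-element vertex sets inducing a triangle in $G$. For $\mathcal{E}'\subseteq\mathcal{E}$, $G[\mathcal{E}']$ is the graph whose vertices are the vertices occurring in hyperedges of $\mathcal{E}'$ and in which $u,v$ are adjacent iff $\{u,v\}\subseteq e$ for some $e\in\mathcal{E}'$. *)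

theory Defs
  imports Main
begin

definition simple_graph :: "'a set \<Rightarrow> 'a set set \<Rightarrow> bool" where
  "simple_graph V E \<longleftrightarrow> finite V \<and> (\<forall>e\<in>E. \<exists>u v. e = {u, v} \<and> u \<noteq> v \<and> u \<in> V \<and> v \<in> V)"

definition is_cycle :: "'a set \<Rightarrow> 'a set set \<Rightarrow> 'a list \<Rightarrow> bool" where
  "is_cycle V E cs \<longleftrightarrow> length cs \<ge> 3 \<and> distinct cs \<and> set cs \<subseteq> V \<and>
     (\<forall>i < length cs. {cs ! i, cs ! ((i + 1) mod length cs)} \<in> E)"

definition cycle_edges :: "'a list \<Rightarrow> 'a set set" where
  "cycle_edges cs = {{cs ! i, cs ! ((i + 1) mod length cs)} | i. i < length cs}"

definition induced_cycle :: "'a set \<Rightarrow> 'a set set \<Rightarrow> 'a list \<Rightarrow> bool" where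
  "induced_cycle V E cs \<longleftrightarrow> is_cycle V E cs \<and>
     (\<forall>i < length cs. \<forall>j < length cs. {cs ! i, cs ! j} \<in> E \<longrightarrow> {cs ! i, cs ! j} \<in> cycle_edges cs)"

definition chordal :: "'a set \<Rightarrow> 'a set set \<Rightarrow> bool" where
  "chordal V E \<longleftrightarrow> \<not> (\<exists>cs. induced_cycle V E cs \<and> length cs > 3)"

definition reach :: "'a set set \<Rightarrow> 'a \<Rightarrow> 'a \<Rightarrow> bool" where
  "reach E = (\<lambda>x y. {x, y} \<in> E)\<^sup>*\<^sup>*"

definition connected_graph :: "'a set \<Rightarrow> 'a set set \<Rightarrow> bool" where
  "connected_graph V E \<longleftrightarrow> V \<noteq> {} \<and> (\<forall>u\<in>V. \<forall>v\<in>V. reach E u v)"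

definition cactus :: "'a set \<Rightarrow> 'a set set \<Rightarrow> bool" where
  "cactus V E \<longleftrightarrow> connected_graph V E \<and>
     (\<forall>e\<in>E. \<forall>c1 c2. is_cycle V E c1 \<and> is_cycle V E c2 \<and> e \<in> cycle_edges c1 \<and> e \<in> cycle_edges c2
        \<longrightarrow> cycle_edges c1 = cycle_edges c2)"

definition components :: "'a set \<Rightarrow> 'a set set \<Rightarrow> 'a set set" where
  "components V E = {{v. reach E u v} | u. u \<in> V}"

definition comp_edges :: "'a set set \<Rightarrow> 'a set \<Rightarrow> 'a set set" where
  "comp_edges E C = {e \<in> E. e \<subseteq> C}"

definition hypergraph :: "'a set \<Rightarrow> 'a set set \<Rightarrow> bool" where
  "hypergraph V \<E> \<longleftrightarrow> finite V \<and> (\<forall>e\<in>\<E>. e \<noteq> {} \<and> e \<subseteq> V)"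

definition subhypergraph :: "'a set \<Rightarrow> 'a set set \<Rightarrow> 'a set \<Rightarrow> 'a set set \<Rightarrow> bool" where
  "subhypergraph V' \<E>' V \<E> \<longleftrightarrow> hypergraph V' \<E>' \<and> V' \<subseteq> V \<and> \<E>' \<subseteq> \<E>"

definition berge_cycle :: "'a set set \<Rightarrow> 'a set list \<Rightarrow> 'a list \<Rightarrow> bool" where
  "berge_cycle \<E> Es xs \<longleftrightarrow> length Es = length xs \<and> length Es \<ge> 2 \<and> distinct Es \<and> distinct xs \<and>
     set Es \<subseteq> \<E> \<and> (\<forall>i < length Es. xs ! i \<in> Es ! i \<inter> Es ! ((i + 1) mod length Es))"

definition berge_acyclic :: "'a set set \<Rightarrow> bool" where
  "berge_acyclic \<E> \<longleftrightarrow> \<not> (\<exists>Es xs. berge_cycle \<E> Es xs)"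

text \<open>Hyperedges of H(G): the 3-element vertex sets inducing a triangle.\<close>

definition triangles :: "'a set \<Rightarrow> 'a set set \<Rightarrow> 'a set set" where
  "triangles V E = {{x, y, z} | x y z. x \<in> V \<and> y \<in> V \<and> z \<in> V \<and> x \<noteq> y \<and> y \<noteq> z \<and> x \<noteq> z \<and>
                      {x, y} \<in> E \<and> {y, z} \<in> E \<and> {x, z} \<in> E}"

text \<open>G[E']: vertices occurring in hyperedges of E', u v adjacent iff both in some hyperedge.\<close>

definition hg_vertices :: "'a set set \<Rightarrow> 'a set" where
  "hg_vertices \<E>' = \<Union> \<E>'"

definition hg_edges :: "'a set set \<Rightarrow> 'a set set" where
  "hg_edges \<E>' = {{u, v} | u v. u \<noteq> v \<and> (\<exists>e\<in>\<E>'. {u, v} \<subseteq> e)}"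

end

theory Submission
  imports Defs
begin

definition walk :: "'a set set \<Rightarrow> nat \<Rightarrow> (nat \<Rightarrow> 'a set) \<Rightarrow> (nat \<Rightarrow> 'a) \<Rightarrow> bool" where
  "walk \<E> m f x \<longleftrightarrow> (\<forall>i<m. f i \<in> \<E> \<and> x i \<in> f i \<and> x i \<in> f (Suc i mod m)) \<and> inj_on x {..<m}"

lemma rot_aux: "(a + k) mod m = (b + k) mod (m::nat) \<Longrightarrow> a < m \<Longrightarrow> b < m \<Longrightarrow> a \<le> b \<Longrightarrow> a = b"
proof -
  assume h: "(a + k) mod m = (b + k) mod (m::nat)" "a < m" "b < m" "a \<le> b"
  then have "m dvd (b + k) - (a + k)" using mod_eq_dvd_iff_nat[of "a+k" "b+k" m] h(4) by simp
  then have "m dvd b - a" by simp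
  moreover have "b - a < m" using h by simp
  ultimately have "b - a = 0" using dvd_imp_le by (metis not_less zero_less_iff_neq_zero)
  then show "a = b" using h by simp
qed
lemma rot_inj: "inj_on (\<lambda>t. (t + k) mod (m::nat)) {..<m}"
  unfolding inj_on_def
  by (metis lessThan_iff nat_le_linear rot_aux)

lemma walk_rot:
  assumes "walk \<E> m f x"
  shows "walk \<E> m (\<lambda>t. f ((t+k) mod m)) (\<lambda>t. x ((t+k) mod m))"
proof -
  have A: "\<forall>i<m. f i \<in> \<E> \<and> x i \<in> f i \<and> x i \<in> f (Suc i mod m)" and I: "inj_on x {..<m}"
    using assms unfolding walk_def by auto
  have P: "f ((i+k) mod m) \<in> \<E> \<and> x ((i+k) mod m) \<in> f ((i+k) mod m) \<and> x ((i+k) mod m) \<in> f ((Suc i mod m + k) mod m)"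
    if i: "i < m" for i
  proof -
    have lt: "(i+k) mod m < m" using i by simp
    have eq: "Suc ((i+k) mod m) mod m = (Suc i mod m + k) mod m"
      by (metis mod_Suc_eq mod_add_left_eq add_Suc)
    have "f ((i+k) mod m) \<in> \<E> \<and> x ((i+k) mod m) \<in> f ((i+k) mod m) \<and> x ((i+k) mod m) \<in> f (Suc ((i+k) mod m) mod m)"
      using A lt by blast
    then show ?thesis by (simp only: eq)
  qed
  have "inj_on (x \<circ> (\<lambda>t. (t + k) mod m)) {..<m}"
  proof (rule comp_inj_on[OF rot_inj])
    have "(\<lambda>t. (t + k) mod m) ` {..<m} \<subseteq> {..<m}" by auto
    then show "inj_on x ((\<lambda>t. (t + k) mod m) ` {..<m})" using inj_on_subset[OF I] by blast
  qed
  then have "inj_on (\<lambda>t. x ((t+k) mod m)) {..<m}" by (simp add: comp_def)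
  then show ?thesis unfolding walk_def using P by blast
qed

lemma walk_sub:
  assumes "walk \<E> m f x" "i < j" "j < m" "f i = f j"
  shows "walk \<E> (j-i) (\<lambda>t. f (Suc i + t)) (\<lambda>t. if t < j-i-1 then x (Suc i+t) else x i)"
proof -
  have A: "\<forall>i<m. f i \<in> \<E> \<and> x i \<in> f i \<and> x i \<in> f (Suc i mod m)" and I: "inj_on x {..<m}"
    using assms unfolding walk_def by auto
  have "\<forall>t<j-i. f (Suc i + t) \<in> \<E> \<and> (if t < j-i-1 then x (Suc i+t) else x i) \<in> f (Suc i + t)
      \<and> (if t < j-i-1 then x (Suc i+t) else x i) \<in> f (Suc i + (Suc t mod (j-i)))"
  proof (intro allI impI)
    fix t assume t: "t < j - i"
    show "f (Suc i + t) \<in> \<E> \<and> (if t < j-i-1 then x (Suc i+t) else x i) \<in> f (Suc i + t)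
      \<and> (if t < j-i-1 then x (Suc i+t) else x i) \<in> f (Suc i + (Suc t mod (j-i)))"
    proof (cases "t < j-i-1")
      case True
      have lt: "Suc i + t < m" using True assms by arith
      have a: "f (Suc i+t) \<in> \<E> \<and> x (Suc i+t) \<in> f (Suc i+t) \<and> x (Suc i+t) \<in> f (Suc (Suc i+t) mod m)"
        using A lt by blast
      have e1: "Suc (Suc i + t) mod m = Suc i + (Suc t mod (j-i))" using True assms by simp
      show ?thesis using a True by (simp only: e1 if_True)
    next
      case False
      then have "t = j - i - 1" using t by simp
      then have st: "Suc t = j - i" using assms by simp
      then have "Suc i + t = j" "Suc t mod (j-i) = 0" using assms by auto
      moreover have "Suc i mod m = Suc i" using assms by simp
      moreover have a: "f i \<in> \<E> \<and> x i \<in> f i \<and> x i \<in> f (Suc i mod m)"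
        using A assms(2,3) less_trans by blast
      ultimately show ?thesis using False assms by simp
    qed
  qed
  moreover have "inj_on (\<lambda>t. if t < j-i-1 then x (Suc i+t) else x i) {..<j-i}"
    unfolding inj_on_def
  proof (intro ballI impI)
    fix a b assume a: "a \<in> {..<j-i}" and b: "b \<in> {..<j-i}"
      and e: "(if a < j-i-1 then x (Suc i+a) else x i) = (if b < j-i-1 then x (Suc i+b) else x i)"
    have xi: "\<And>p q. p < m \<Longrightarrow> q < m \<Longrightarrow> x p = x q \<Longrightarrow> p = q" using I by (simp add: inj_on_eq_iff)
    have am: "Suc i + a < m" if "a < j-i-1" using that assms by simp
    have bm: "Suc i + b < m" if "b < j-i-1" using that assms by simp
    have im: "i < m" using assms by simp
    show "a = b"
    proof (cases "a < j-i-1")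
      case True
      show ?thesis
      proof (cases "b < j-i-1")
        case True2: True
        then have "x (Suc i + a) = x (Suc i + b)" using e True by simp
        then have "Suc i + a = Suc i + b" using xi[OF am[OF True] bm[OF True2]] by blast
        then show ?thesis by simp
      next
        case False
        then have "x (Suc i + a) = x i" using e True by simp
        then have "Suc i + a = i" using xi[OF am[OF True] im] by blast
        then show ?thesis by simp
      qed
    next
      case False
      show ?thesis
      proof (cases "b < j-i-1")
        case True2: True
        then have "x (Suc i + b) = x i" using e False by simp
        then have "Suc i + b = i" using xi[OF bm[OF True2] im] by blast
        then show ?thesis by simp
      next
        case False2: False
        then show ?thesis using False a b by simp
      qed
    qed
  qed
  ultimately show ?thesis unfolding walk_def by blast
qed


lemma walk_const:
  assumes B: "berge_acyclic \<E>"
  shows "walk \<E> m f x \<Longrightarrow> \<forall>t<m. f t = f 0"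
proof (induction m arbitrary: f x rule: less_induct)
  case (less m f x)
  have A: "\<forall>i<m. f i \<in> \<E> \<and> x i \<in> f i \<and> x i \<in> f (Suc i mod m)" and I: "inj_on x {..<m}"
    using less.prems unfolding walk_def by auto
  show ?case
  proof (cases "inj_on f {..<m}")
    case True
    show ?thesis
    proof (cases "m \<le> 1")
      case True
      show ?thesis
      proof (intro allI impI)
        fix t assume "t < m"
        then have "t = 0" using True by simp
        then show "f t = f 0" by simp
      qed
    next
      case False
      have "berge_cycle \<E> (map f [0..<m]) (map x [0..<m])"
        unfolding berge_cycle_def
      proof (intro conjI allI impI)
        show "distinct (map f [0..<m])" using True by (simp add: distinct_map atLeast0LessThan)
        show "distinct (map x [0..<m])" using I by (simp add: distinct_map atLeast0LessThan)
        show "set (map f [0..<m]) \<subseteq> \<E>" using A by auto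
        fix i assume "i < length (map f [0..<m])"
        then have i: "i < m" by simp
        then have "Suc i mod m < m" by simp
        then show "map x [0..<m] ! i \<in> map f [0..<m] ! i \<inter> map f [0..<m] ! ((i + 1) mod length (map f [0..<m]))"
          using A i by simp
      qed (use False in simp_all)
      then show ?thesis using B unfolding berge_acyclic_def by blast
    qed
  next
    case False
    then obtain a b where ab: "a < m" "b < m" "a \<noteq> b" "f a = f b" unfolding inj_on_def by auto
    obtain i j where ij: "i < j" "j < m" "f i = f j"
    proof (cases "a < b")
      case True then show ?thesis using that ab by blast
    next
      case False then have "b < a" using ab by simp
      then show ?thesis using that ab by force
    qed
    have w1: "walk \<E> (j-i) (\<lambda>t. f (Suc i + t)) (\<lambda>t. if t < j-i-1 then x (Suc i+t) else x i)"
      using walk_sub[OF less.prems ij] .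
    have c1: "\<forall>t<j-i. f (Suc i + t) = f (Suc i + 0)"
    proof -
      have "j - i < m" using ij by arith
      from less.IH[OF this w1] show ?thesis by blast
    qed
    have h1: "\<forall>t. i < t \<and> t \<le> j \<longrightarrow> f t = f i"
    proof (intro allI impI)
      fix t assume t: "i < t \<and> t \<le> j"
      have "t - Suc i < j - i" using t by arith
      then have "f (Suc i + (t - Suc i)) = f (Suc i + 0)" using c1 by blast
      moreover have "j - Suc i < j - i" using ij by arith
      then have "f (Suc i + (j - Suc i)) = f (Suc i + 0)" using c1 by blast
      then have "f (Suc i + (j - Suc i)) = f (Suc i)" by simp
      moreover have "Suc i + (t - Suc i) = t" "Suc i + (j - Suc i) = j" using t ij by arith+
      ultimately show "f t = f i" using ij(3) by simp
    qed
    define f' where "f' = (\<lambda>t. f ((t+j) mod m))"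
    define x' where "x' = (\<lambda>t. x ((t+j) mod m))"
    have w': "walk \<E> m f' x'" unfolding f'_def x'_def using walk_rot[OF less.prems] .
    have e0: "f' 0 = f' (m-j+i)" unfolding f'_def using ij by (simp add: ij(3))
    have ltm: "m - j + i < m" using ij by simp
    have w2: "walk \<E> (m-j+i-0) (\<lambda>t. f' (Suc 0 + t)) (\<lambda>t. if t < m-j+i-0-1 then x' (Suc 0+t) else x' 0)"
      using walk_sub[OF w' _ ltm e0] ij by simp
    have c2: "\<forall>t<m-j+i. f' (Suc t) = f' (Suc 0)"
    proof -
      have "m-j+i-0 < m" using ltm by simp
      from less.IH[OF this w2] have "\<forall>t<m-j+i-0. f' (Suc 0 + t) = f' (Suc 0 + 0)" by blast
      then show ?thesis by simp
    qed
    have fi: "f' (m-j+i) = f i" unfolding f'_def using ij by simp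
    have h2: "\<forall>s. s \<le> m-j+i \<longrightarrow> f ((s+j) mod m) = f i"
    proof (intro allI impI)
      fix s assume s: "s \<le> m-j+i"
      show "f ((s+j) mod m) = f i"
      proof (cases s)
        case 0 then show ?thesis using ij by simp
      next
        case (Suc s')
        then have "s' < m-j+i" using s by simp
        then have "f' s = f' (Suc 0)" using c2 \<open>s = Suc s'\<close> by blast
        moreover have "f' (m-j+i) = f' (Suc 0)"
        proof -
          have q1: "m-j+i-1 < m-j+i" "Suc (m-j+i-1) = m-j+i" using ij by auto
          show ?thesis using c2[rule_format, OF q1(1)] q1(2) by metis
        qed
        ultimately show ?thesis using fi unfolding f'_def by simp
      qed
    qed
    have all: "\<forall>t<m. f t = f i"
    proof (intro allI impI)
      fix t assume t: "t < m"
      show "f t = f i"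
      proof (cases "t \<le> i")
        case True
        have "m - j + t \<le> m - j + i" using True by simp
        then have "f ((m - j + t + j) mod m) = f i" using h2 by blast
        moreover have "(m - j + t + j) mod m = t" using ij t by simp
        ultimately show ?thesis by simp
      next
        case False
        show ?thesis
        proof (cases "t \<le> j")
          case True then show ?thesis using h1 False by simp
        next
          case False
          have "t - j \<le> m - j + i" using t ij by arith
          then have "f ((t - j + j) mod m) = f i" using h2 by blast
          moreover have "(t - j + j) mod m = t" using False t by simp
          ultimately show ?thesis by simp
        qed
      qed
    qed
    have "0 < m" using ij by simp
    then have f0: "f 0 = f i" using all by blast
    show ?thesis
    proof (intro allI impI)
      fix t assume "t < m"
      then have "f t = f i" using all by blast
      then show "f t = f 0" using f0 by simp
    qed
  qed
qed

lemma cycle_in_edge: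
  assumes B: "berge_acyclic \<E>" and d: "distinct cs" and n: "length cs = n" "0 < n"
    and ed: "\<forall>i<n. {cs!i, cs!(Suc i mod n)} \<in> hg_edges \<E>"
  shows "\<exists>e\<in>\<E>. set cs \<subseteq> e"
proof -
  have "\<forall>i\<in>{..<n}. \<exists>e. e \<in> \<E> \<and> cs!i \<in> e \<and> cs!(Suc i mod n) \<in> e"
  proof
    fix i assume "i \<in> {..<n}"
    then have "{cs!i, cs!(Suc i mod n)} \<in> hg_edges \<E>" using ed by simp
    then obtain u v where uv: "{cs!i, cs!(Suc i mod n)} = {u,v}" "\<exists>e\<in>\<E>. {u,v} \<subseteq> e"
      unfolding hg_edges_def by auto
    then obtain e where e: "e \<in> \<E>" "{u,v} \<subseteq> e" by auto
    then have "{cs!i, cs!(Suc i mod n)} \<subseteq> e" using uv(1) by simp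
    then show "\<exists>e. e \<in> \<E> \<and> cs!i \<in> e \<and> cs!(Suc i mod n) \<in> e" using e by auto
  qed
  from bchoice[OF this] obtain f where f: "\<forall>i\<in>{..<n}. f i \<in> \<E> \<and> cs!i \<in> f i \<and> cs!(Suc i mod n) \<in> f i"
    by blast
  define x where "x = (\<lambda>i. cs!(Suc i mod n))"
  have W1: "\<forall>i<n. f i \<in> \<E> \<and> x i \<in> f i \<and> x i \<in> f (Suc i mod n)"
  proof (intro allI impI)
    fix i assume i: "i < n"
    then have "Suc i mod n < n" using n by simp
    then show "f i \<in> \<E> \<and> x i \<in> f i \<and> x i \<in> f (Suc i mod n)" using f i unfolding x_def by auto
  qed
  have W2: "inj_on x {..<n}"
  proof -
    show "inj_on x {..<n}" unfolding inj_on_def x_def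
    proof (intro ballI impI)
      fix a b assume a: "a \<in> {..<n}" and b: "b \<in> {..<n}" and e: "cs ! (Suc a mod n) = cs ! (Suc b mod n)"
      have "Suc a mod n < length cs" "Suc b mod n < length cs" using n by auto
      then have "Suc a mod n = Suc b mod n" using e nth_eq_iff_index_eq[OF d] by blast
      then show "a = b" using a b by (auto simp: mod_Suc split: if_splits)
    qed
  qed
  have "walk \<E> n f x" unfolding walk_def using W1 W2 by blast
  then have c: "\<forall>t<n. f t = f 0" using walk_const[OF B] by blast
  have "set cs \<subseteq> f 0"
  proof
    fix v assume "v \<in> set cs"
    then obtain k where k: "k < n" "v = cs!k" using n by (auto simp: in_set_conv_nth)
    then have "v \<in> f k" using f by blast
    moreover have "f k = f 0" using c k(1) by blast
    ultimately show "v \<in> f 0" by simp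
  qed
  moreover have "f 0 \<in> \<E>" using f n(2) by simp
  ultimately show ?thesis by blast
qed


lemma tri_card: "e \<in> triangles V E \<Longrightarrow> card e = 3 \<and> finite e"
  unfolding triangles_def by auto

lemma cycle_edges3:
  assumes "length c = 3" "distinct c"
  shows "cycle_edges c = {{u,v} | u v. u \<in> set c \<and> v \<in> set c \<and> u \<noteq> v}"
proof -
  obtain a b d where c: "c = [a,b,d]" using assms(1)
    by (metis (no_types) length_0_conv length_Suc_conv numeral_3_eq_3)
  have l: "\<And>i::nat. i < 3 \<longleftrightarrow> i = 0 \<or> i = 1 \<or> i = 2" by auto
  have "cycle_edges c = (\<lambda>i. {c!i, c!((i+1) mod length c)}) ` {..<length c}"
    unfolding cycle_edges_def by auto
  also have "{..<length c} = {0,1,2}" using assms(1) by auto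
  also have "(\<lambda>i. {c!i, c!((i+1) mod length c)}) ` {0,1,2} = {{a,b},{b,d},{d,a}}"
    unfolding c by simp
  finally have "cycle_edges c = {{a,b},{b,d},{d,a}}" .
  also have "\<dots> = {{u,v} | u v. u \<in> set c \<and> v \<in> set c \<and> u \<noteq> v}"
    using assms(2) unfolding c by (auto simp: insert_commute)
  finally show ?thesis .
qed

lemma reach_sym:
  assumes "reach H u v" shows "reach H v u"
  using assms unfolding reach_def
proof (induction rule: rtranclp_induct)
  case base then show ?case by simp
next
  case (step y z)
  have "{z,y} \<in> H" using step(2) by (simp add: insert_commute)
  then show ?case using step(3) by (meson converse_rtranclp_into_rtranclp)
qed

lemma reach_comp:
  assumes "reach H u v" shows "reach (comp_edges H {w. reach H u w}) u v"
  using assms unfolding reach_def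
proof (induction rule: rtranclp_induct)
  case base then show ?case by simp
next
  case (step y z)
  have hz: "(\<lambda>x y. {x, y} \<in> H)\<^sup>*\<^sup>* u z" using step(1,2) by (simp add: rtranclp.rtrancl_into_rtrancl)
  have "{y,z} \<in> comp_edges H {w. (\<lambda>x y. {x, y} \<in> H)\<^sup>*\<^sup>* u w}"
    unfolding comp_edges_def using step(1,2) hz by auto
  then show ?case using step(3) by (simp add: rtranclp.rtrancl_into_rtrancl)
qed

theorem mainTheorem8:
  fixes V :: "'a set" and E :: "'a set set" and V' :: "'a set" and \<E>' :: "'a set set"
  assumes "simple_graph V E"
    and "chordal V E"
    and "subhypergraph V' \<E>' V (triangles V E)"
    and "berge_acyclic \<E>'"
  shows "\<forall>F \<in> components (hg_vertices \<E>') (hg_edges \<E>').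
           cactus F (comp_edges (hg_edges \<E>') F) \<and>
           (\<forall>cs. is_cycle F (comp_edges (hg_edges \<E>') F) cs \<longrightarrow> length cs = 3)"
proof
  fix F assume "F \<in> components (hg_vertices \<E>') (hg_edges \<E>')"
  then obtain u where u: "F = {v. reach (hg_edges \<E>') u v}"
    unfolding components_def by auto
  define H where "H = hg_edges \<E>'"
  have sub: "\<E>' \<subseteq> triangles V E" using assms(3) unfolding subhypergraph_def by auto
  have cyc: "\<exists>e\<in>\<E>'. set cs = e \<and> length cs = 3" if "is_cycle F (comp_edges H F) cs" for cs
  proof -
    have c: "length cs \<ge> 3" "distinct cs" "\<forall>i<length cs. {cs!i, cs!(Suc i mod length cs)} \<in> H"
      using that unfolding is_cycle_def comp_edges_def by auto
    have "0 < length cs" using c(1) by linarith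
    then obtain e where e: "e \<in> \<E>'" "set cs \<subseteq> e"
      using cycle_in_edge[OF assms(4) c(2) refl _ c(3)[unfolded H_def]] by blast
    have ce: "card e = 3" "finite e" using tri_card e sub by blast+
    have "length cs \<le> 3" using card_mono[OF ce(2) e(2)] ce c(2) distinct_card by metis
    then have l: "length cs = 3" using c by simp
    then have "card (set cs) = card e" using ce c distinct_card by metis
    then have "set cs = e" using card_subset_eq[OF ce(2) e(2)] by simp
    then show ?thesis using e l by blast
  qed
  have conn: "connected_graph F (comp_edges H F)"
    unfolding connected_graph_def
  proof (intro conjI ballI)
    have "u \<in> F" using u unfolding reach_def by simp
    then show "F \<noteq> {}" by blast
    have r: "reach (comp_edges H F) u v" if "v \<in> F" for v
    proof -
      have "reach (hg_edges \<E>') u v" using that u by simp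
      from reach_comp[OF this] show ?thesis using u unfolding H_def by simp
    qed
    fix v w assume vw: "v \<in> F" "w \<in> F"
    have "reach (comp_edges H F) v u" by (rule reach_sym[OF r[OF vw(1)]])
    moreover have "reach (comp_edges H F) u w" by (rule r[OF vw(2)])
    ultimately show "reach (comp_edges H F) v w"
      unfolding reach_def by (rule rtranclp_trans)
  qed
  have cact: "\<forall>ed\<in>comp_edges H F. \<forall>c1 c2. is_cycle F (comp_edges H F) c1 \<and> is_cycle F (comp_edges H F) c2
      \<and> ed \<in> cycle_edges c1 \<and> ed \<in> cycle_edges c2 \<longrightarrow> cycle_edges c1 = cycle_edges c2"
  proof (intro ballI allI impI)
    fix ed c1 c2
    assume a: "is_cycle F (comp_edges H F) c1 \<and> is_cycle F (comp_edges H F) c2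
      \<and> ed \<in> cycle_edges c1 \<and> ed \<in> cycle_edges c2"
    have a1: "is_cycle F (comp_edges H F) c1" and a2: "is_cycle F (comp_edges H F) c2" using a by blast+
    obtain e1 where e1: "e1 \<in> \<E>'" "set c1 = e1" "length c1 = 3" using cyc[OF a1] by blast
    obtain e2 where e2: "e2 \<in> \<E>'" "set c2 = e2" "length c2 = 3" using cyc[OF a2] by blast
    have d1: "distinct c1" "distinct c2" using a1 a2 unfolding is_cycle_def by blast+
    have ce1: "cycle_edges c1 = {{u,v} | u v. u \<in> e1 \<and> v \<in> e1 \<and> u \<noteq> v}"
      using cycle_edges3[OF e1(3) d1(1)] e1(2) by simp
    have ce2: "cycle_edges c2 = {{u,v} | u v. u \<in> e2 \<and> v \<in> e2 \<and> u \<noteq> v}"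
      using cycle_edges3[OF e2(3) d1(2)] e2(2) by simp
    have "ed \<in> cycle_edges c1" "ed \<in> cycle_edges c2" using a by blast+
    then have m1: "ed \<in> {{u,v} | u v. u \<in> e1 \<and> v \<in> e1 \<and> u \<noteq> v}"
      and m2: "ed \<in> {{u,v} | u v. u \<in> e2 \<and> v \<in> e2 \<and> u \<noteq> v}" using ce1 ce2 by simp_all
    from m1 obtain p q where pq: "ed = {p,q}" "p \<in> e1" "q \<in> e1" "p \<noteq> q" by blast
    from m2 have "ed \<subseteq> e2" by blast
    then have pq2: "p \<in> e2" "q \<in> e2" using pq by auto
    have "e1 = e2"
    proof (rule ccontr)
      assume ne: "e1 \<noteq> e2"
      have "berge_cycle \<E>' [e1,e2] [p,q]"
        unfolding berge_cycle_def
      proof (intro conjI allI impI)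
        fix i assume "i < length [e1,e2]"
        then have "i = 0 \<or> i = 1" by auto
        then show "[p, q] ! i \<in> [e1, e2] ! i \<inter> [e1, e2] ! ((i + 1) mod length [e1, e2])"
          using pq pq2 by auto
      next
        show "length [e1, e2] = length [p, q]" by simp
      next
        show "2 \<le> length [e1, e2]" by simp
      next
        show "distinct [e1, e2]" using ne by simp
      next
        show "distinct [p, q]" using pq(4) by simp
      next
        show "set [e1, e2] \<subseteq> \<E>'" using e1(1) e2(1) by simp
      qed
      then show False using assms(4) unfolding berge_acyclic_def by blast
    qed
    then show "cycle_edges c1 = cycle_edges c2" using ce1 ce2 by simp
  qed
  show "cactus F (comp_edges (hg_edges \<E>') F) \<and>
           (\<forall>cs. is_cycle F (comp_edges (hg_edges \<E>') F) cs \<longrightarrow> length cs = 3)"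
  proof -
    have c1: "cactus F (comp_edges H F)" unfolding cactus_def using conn cact by blast
    have c2: "\<forall>cs. is_cycle F (comp_edges H F) cs \<longrightarrow> length cs = 3" using cyc by blast
    show ?thesis using c1 c2 unfolding H_def by blast
  qed
qed

end
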